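(* Let $D$ be a division semialgebra over $\mathbb{Z}_\mathrm{max}$ with finite unit index. Then $D\cong F^{(n)}$ for some positive integer $n$.
   Context: A (possibly noncommutative) semiring has a commutative associative addition with identity $0$ and an associative multiplication with identity $1$, satisfying both distributive laws; a division semiring is one in which every nonzero element is invertible. $\mathbb{Z}_\mathrm{max}=\mathbb{Z}\cup\{-\infty\}$ is the semifield with addition $\max$ and multiplication ordinary addition; writing $u$ for the integer $1$ in it, $\mathbb{Z}_\mathrm{max}=\{0\}\cup\{u^k:k\in\mathbb{Z}\}$. A division semialgebra over a semifield $K$ is a division semiring $D$ with an injective homomorphism from $K$ into the center of $D$. The unit index is $\mathrm{ui}(D/K)=|D^\times/K^\times|$. For a positive integer $n$, $F^{(n)}$ is the semifield $\mathbb{Z}_\mathrm{max}$ regarded as a semialgebra over $\mathbb{Z}_\mathrm{max}$ via $u^k\mapsto u^{nk}$, $0\mapsto 0$; the isomorphism is one of semialgebras over $\mathbb{Z}_\mathrm{max}$. *)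

theory Defs
  imports Main
begin

text \<open>The semifield Z_max = Z \<union> {-\<infinity>}, encoded as int option (None = -\<infinity> = 0,
  Some k = u^k). Addition is max, multiplication is integer addition.\<close>

type_synonym zmax = "int option"

definition zmax_add :: "zmax \<Rightarrow> zmax \<Rightarrow> zmax" where
  "zmax_add a b = (case a of None \<Rightarrow> b
     | Some x \<Rightarrow> (case b of None \<Rightarrow> Some x | Some y \<Rightarrow> Some (max x y)))"

definition zmax_mul :: "zmax \<Rightarrow> zmax \<Rightarrow> zmax" where
  "zmax_mul a b = (case a of None \<Rightarrow> None
     | Some x \<Rightarrow> (case b of None \<Rightarrow> None | Some y \<Rightarrow> Some (x + y)))"

definition zmax_zero :: zmax where "zmax_zero = None"
definition zmax_one :: zmax where "zmax_one = Some 0"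

definition semiring_on ::
  "'a set \<Rightarrow> ('a \<Rightarrow> 'a \<Rightarrow> 'a) \<Rightarrow> ('a \<Rightarrow> 'a \<Rightarrow> 'a) \<Rightarrow> 'a \<Rightarrow> 'a \<Rightarrow> bool" where
  "semiring_on S add mul z e \<longleftrightarrow>
     z \<in> S \<and> e \<in> S \<and>
     (\<forall>x\<in>S. \<forall>y\<in>S. add x y \<in> S \<and> mul x y \<in> S) \<and>
     (\<forall>x\<in>S. \<forall>y\<in>S. \<forall>w\<in>S. add (add x y) w = add x (add y w)) \<and>
     (\<forall>x\<in>S. \<forall>y\<in>S. add x y = add y x) \<and>
     (\<forall>x\<in>S. add z x = x) \<and>
     (\<forall>x\<in>S. \<forall>y\<in>S. \<forall>w\<in>S. mul (mul x y) w = mul x (mul y w)) \<and>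
     (\<forall>x\<in>S. mul e x = x \<and> mul x e = x) \<and>
     (\<forall>x\<in>S. \<forall>y\<in>S. \<forall>w\<in>S. mul x (add y w) = add (mul x y) (mul x w)) \<and>
     (\<forall>x\<in>S. \<forall>y\<in>S. \<forall>w\<in>S. mul (add x y) w = add (mul x w) (mul y w))"

definition units_on :: "'a set \<Rightarrow> ('a \<Rightarrow> 'a \<Rightarrow> 'a) \<Rightarrow> 'a \<Rightarrow> 'a set" where
  "units_on S mul e = {x \<in> S. \<exists>y\<in>S. mul x y = e \<and> mul y x = e}"

definition division_semiring_on ::
  "'a set \<Rightarrow> ('a \<Rightarrow> 'a \<Rightarrow> 'a) \<Rightarrow> ('a \<Rightarrow> 'a \<Rightarrow> 'a) \<Rightarrow> 'a \<Rightarrow> 'a \<Rightarrow> bool" where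
  "division_semiring_on S add mul z e \<longleftrightarrow>
     semiring_on S add mul z e \<and> (\<forall>x\<in>S. x \<noteq> z \<longrightarrow> x \<in> units_on S mul e)"

definition center_on :: "'a set \<Rightarrow> ('a \<Rightarrow> 'a \<Rightarrow> 'a) \<Rightarrow> 'a set" where
  "center_on S mul = {c \<in> S. \<forall>x\<in>S. mul c x = mul x c}"

definition zmax_hom_on ::
  "'a set \<Rightarrow> ('a \<Rightarrow> 'a \<Rightarrow> 'a) \<Rightarrow> ('a \<Rightarrow> 'a \<Rightarrow> 'a) \<Rightarrow> 'a \<Rightarrow> 'a \<Rightarrow> (zmax \<Rightarrow> 'a) \<Rightarrow> bool" where
  "zmax_hom_on S add mul z e f \<longleftrightarrow>
     (\<forall>a. f a \<in> S) \<and> f zmax_zero = z \<and> f zmax_one = e \<and>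
     (\<forall>a b. f (zmax_add a b) = add (f a) (f b)) \<and>
     (\<forall>a b. f (zmax_mul a b) = mul (f a) (f b))"

definition division_semialgebra_zmax ::
  "'a set \<Rightarrow> ('a \<Rightarrow> 'a \<Rightarrow> 'a) \<Rightarrow> ('a \<Rightarrow> 'a \<Rightarrow> 'a) \<Rightarrow> 'a \<Rightarrow> 'a \<Rightarrow> (zmax \<Rightarrow> 'a) \<Rightarrow> bool" where
  "division_semialgebra_zmax S add mul z e f \<longleftrightarrow>
     division_semiring_on S add mul z e \<and> zmax_hom_on S add mul z e f \<and> inj f \<and>
     (\<forall>a. f a \<in> center_on S mul)"

text \<open>The cosets of the (central, hence normal) subgroup f(K^x) in D^x; K^x = {u^k}.
  The unit index ui(D/K) is the number of these cosets.\<close>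
definition unit_cosets ::
  "'a set \<Rightarrow> ('a \<Rightarrow> 'a \<Rightarrow> 'a) \<Rightarrow> 'a \<Rightarrow> (zmax \<Rightarrow> 'a) \<Rightarrow> 'a set set" where
  "unit_cosets S mul e f = (\<lambda>x. {mul x (f (Some k)) | k. True}) ` units_on S mul e"

text \<open>Structure map of F^(n): u^k \<mapsto> u^(nk), 0 \<mapsto> 0.\<close>
definition Fn_map :: "nat \<Rightarrow> zmax \<Rightarrow> zmax" where
  "Fn_map n a = map_option (\<lambda>k. int n * k) a"

definition iso_to_Fn ::
  "'a set \<Rightarrow> ('a \<Rightarrow> 'a \<Rightarrow> 'a) \<Rightarrow> ('a \<Rightarrow> 'a \<Rightarrow> 'a) \<Rightarrow> 'a \<Rightarrow> 'a \<Rightarrow> (zmax \<Rightarrow> 'a) \<Rightarrow> nat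
     \<Rightarrow> ('a \<Rightarrow> zmax) \<Rightarrow> bool" where
  "iso_to_Fn S add mul z e f n \<psi> \<longleftrightarrow>
     bij_betw \<psi> S UNIV \<and> \<psi> z = zmax_zero \<and> \<psi> e = zmax_one \<and>
     (\<forall>x\<in>S. \<forall>y\<in>S. \<psi> (add x y) = zmax_add (\<psi> x) (\<psi> y)) \<and>
     (\<forall>x\<in>S. \<forall>y\<in>S. \<psi> (mul x y) = zmax_mul (\<psi> x) (\<psi> y)) \<and>
     (\<forall>a. \<psi> (f a) = Fn_map n a)"

end

theory Submission
  imports Defs
begin

locale dsa =
  fixes S :: "'a set" and add mul :: "'a \<Rightarrow> 'a \<Rightarrow> 'a" and z e :: 'a and f :: "zmax \<Rightarrow> 'a"
  assumes DSA: "division_semialgebra_zmax S add mul z e f"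
  and Fin: "finite (unit_cosets S mul e f)"
begin

lemma SR: "semiring_on S add mul z e"
  using DSA unfolding division_semialgebra_zmax_def division_semiring_on_def by blast+
lemma SRc: "z \<in> S" "e \<in> S"
  "\<forall>x\<in>S. \<forall>y\<in>S. add x y \<in> S \<and> mul x y \<in> S"
  "\<forall>x\<in>S. \<forall>y\<in>S. \<forall>w\<in>S. add (add x y) w = add x (add y w)"
  "\<forall>x\<in>S. \<forall>y\<in>S. add x y = add y x"
  "\<forall>x\<in>S. add z x = x"
  "\<forall>x\<in>S. \<forall>y\<in>S. \<forall>w\<in>S. mul (mul x y) w = mul x (mul y w)"
  "\<forall>x\<in>S. mul e x = x \<and> mul x e = x"
  "\<forall>x\<in>S. \<forall>y\<in>S. \<forall>w\<in>S. mul x (add y w) = add (mul x y) (mul x w)"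
  "\<forall>x\<in>S. \<forall>y\<in>S. \<forall>w\<in>S. mul (add x y) w = add (mul x w) (mul y w)"
  using SR unfolding semiring_on_def apply - by (elim conjE; assumption)+

lemma z_in: "z \<in> S" and e_in: "e \<in> S" using SRc(1,2) .
lemma add_cl: "x \<in> S \<Longrightarrow> y \<in> S \<Longrightarrow> add x y \<in> S"
  using SRc(3) by blast
lemma mul_cl: "x \<in> S \<Longrightarrow> y \<in> S \<Longrightarrow> mul x y \<in> S"
  using SRc(3) by blast
lemma add_assoc: "x \<in> S \<Longrightarrow> y \<in> S \<Longrightarrow> w \<in> S \<Longrightarrow> add (add x y) w = add x (add y w)"
  using SRc(4) by blast
lemma add_comm: "x \<in> S \<Longrightarrow> y \<in> S \<Longrightarrow> add x y = add y x"
  using SRc(5) by blast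
lemma add_z1: "x \<in> S \<Longrightarrow> add z x = x"
  using SRc(6) by blast
lemma add_z2: "x \<in> S \<Longrightarrow> add x z = x"
  using add_z1 add_comm z_in by metis
lemmas add_z = add_z1 add_z2
lemma mul_assoc: "x \<in> S \<Longrightarrow> y \<in> S \<Longrightarrow> w \<in> S \<Longrightarrow> mul (mul x y) w = mul x (mul y w)"
  using SRc(7) by blast
lemma mul_e1: "x \<in> S \<Longrightarrow> mul e x = x" using SRc(8) by blast
lemma mul_e2: "x \<in> S \<Longrightarrow> mul x e = x" using SRc(8) by blast
lemmas mul_e = mul_e1 mul_e2
lemma distl: "x \<in> S \<Longrightarrow> y \<in> S \<Longrightarrow> w \<in> S \<Longrightarrow> mul x (add y w) = add (mul x y) (mul x w)"
  using SRc(9) by blast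
lemma distr: "x \<in> S \<Longrightarrow> y \<in> S \<Longrightarrow> w \<in> S \<Longrightarrow> mul (add x y) w = add (mul x w) (mul y w)"
  using SRc(10) by blast

lemma HOM: "zmax_hom_on S add mul z e f"
  using DSA unfolding division_semialgebra_zmax_def by blast
lemma injf: "inj f"
  using DSA unfolding division_semialgebra_zmax_def by blast
lemma HOMc: "\<forall>a. f a \<in> S" "f zmax_zero = z" "f zmax_one = e"
  "\<forall>a b. f (zmax_add a b) = add (f a) (f b)"
  "\<forall>a b. f (zmax_mul a b) = mul (f a) (f b)"
  using HOM unfolding zmax_hom_on_def apply - by (elim conjE; assumption)+
lemma f_in: "f a \<in> S" using HOMc(1) by blast
lemma f_None: "f None = z" using HOMc(2) unfolding zmax_zero_def .
lemma f_0: "f (Some 0) = e" using HOMc(3) unfolding zmax_one_def .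
lemma f_add: "f (zmax_add a b) = add (f a) (f b)" using HOMc(4) by blast
lemma f_mul: "f (zmax_mul a b) = mul (f a) (f b)" using HOMc(5) by blast
lemma f_central: "x \<in> S \<Longrightarrow> mul (f a) x = mul x (f a)"
proof -
  assume x: "x \<in> S"
  have "\<forall>a. f a \<in> center_on S mul"
    using DSA unfolding division_semialgebra_zmax_def apply - by (elim conjE; assumption)
  then have "f a \<in> center_on S mul" by blast
  then show ?thesis using x unfolding center_on_def by blast
qed

lemma z_ne_e: "z \<noteq> e"
  using injf f_None f_0 by (metis inj_eq option.distinct(1))

lemma idem: "x \<in> S \<Longrightarrow> add x x = x"
proof -
  assume x: "x \<in> S"
  have "add e e = e" using f_add[of "Some 0" "Some 0"] f_0 by (simp add: zmax_add_def)
  then show ?thesis using distl[OF x e_in e_in] mul_e x by simp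
qed

lemma zz: "mul z z = z"
  using f_mul[of None None] f_None by (simp add: zmax_mul_def)

definition U where "U = S - {z}"

lemma unit_ex: "x \<in> U \<Longrightarrow> \<exists>y\<in>S. mul x y = e \<and> mul y x = e"
  using DSA unfolding division_semialgebra_zmax_def division_semiring_on_def units_on_def U_def
  by blast

definition inv where "inv x = (SOME y. y \<in> S \<and> mul x y = e \<and> mul y x = e)"

lemma inv: "x \<in> U \<Longrightarrow> inv x \<in> S \<and> mul x (inv x) = e \<and> mul (inv x) x = e"
proof -
  assume "x \<in> U"
  then obtain y where "y \<in> S \<and> mul x y = e \<and> mul y x = e" using unit_ex by blast
  then show ?thesis unfolding inv_def by (rule someI)
qed

lemma U_S: "x \<in> U \<Longrightarrow> x \<in> S" and U_nz: "x \<in> U \<Longrightarrow> x \<noteq> z"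
  unfolding U_def by auto

lemma z_not_unit: "y \<in> S \<Longrightarrow> mul z y \<noteq> e"
proof
  assume y: "y \<in> S" and h: "mul z y = e"
  have "z = mul z e" using mul_e z_in by simp
  also have "\<dots> = mul (mul z z) y" using h mul_assoc z_in y by simp
  also have "\<dots> = e" using zz h by simp
  finally show False using z_ne_e by simp
qed

lemma z_not_unit': "y \<in> S \<Longrightarrow> mul y z \<noteq> e"
proof
  assume y: "y \<in> S" and h: "mul y z = e"
  have "z = mul e z" using mul_e z_in by simp
  also have "\<dots> = mul (mul y z) z" using h by simp
  also have "\<dots> = mul y (mul z z)" using mul_assoc z_in y by simp
  also have "\<dots> = e" using zz h by simp
  finally show False using z_ne_e by simp
qed

lemma e_U: "e \<in> U" using e_in z_ne_e U_def by auto

lemma mul_U: "x \<in> U \<Longrightarrow> y \<in> U \<Longrightarrow> mul x y \<in> U"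
proof -
  assume x: "x \<in> U" and y: "y \<in> U"
  have xS: "x \<in> S" and yS: "y \<in> S" using x y by (simp_all add: U_S)
  have "mul x y \<noteq> z"
  proof
    assume h: "mul x y = z"
    obtain w where w: "w \<in> S" "mul y w = e" using unit_ex[OF y] by blast
    have "mul z w = mul (mul x y) w" using h by simp
    also have "\<dots> = mul x (mul y w)" by (rule mul_assoc[OF xS yS w(1)])
    also have "\<dots> = x" using w(2) mul_e2[OF xS] by simp
    finally have zw: "mul z w = x" .
    obtain v where v: "v \<in> S" "mul x v = e" using unit_ex[OF x] by blast
    have "mul z (mul w v) = mul (mul z w) v" by (rule mul_assoc[OF z_in w(1) v(1), symmetric])
    also have "\<dots> = e" using zw v(2) by simp
    finally have "mul z (mul w v) = e" .
    moreover have "mul w v \<in> S" by (rule mul_cl[OF w(1) v(1)])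
    ultimately show False using z_not_unit by blast
  qed
  moreover have "mul x y \<in> S" by (rule mul_cl[OF xS yS])
  ultimately show ?thesis unfolding U_def by blast
qed

lemma inv_U: "x \<in> U \<Longrightarrow> inv x \<in> U"
proof -
  assume x: "x \<in> U"
  have i: "inv x \<in> S" "mul (inv x) x = e" using inv[OF x] by simp_all
  have "inv x \<noteq> z"
  proof
    assume "inv x = z"
    then have "mul z x = e" using i by simp
    then show False using z_not_unit[OF U_S[OF x]] by simp
  qed
  then show ?thesis using i U_def by blast
qed

lemma mul_z: "x \<in> S \<Longrightarrow> mul z x = z" "x \<in> S \<Longrightarrow> mul x z = z"
proof -
  assume x: "x \<in> S"
  show "mul z x = z"
  proof (rule ccontr)
    assume h: "mul z x \<noteq> z"
    then have "x \<noteq> z" using zz by auto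
    then have xu: "x \<in> U" using x U_def by auto
    have "mul z x \<in> U" using h mul_cl z_in x U_def by auto
    then have "mul (mul z x) (inv x) \<in> U" using mul_U inv_U xu by blast
    moreover have "mul (mul z x) (inv x) = z" using mul_assoc z_in x inv[OF xu] mul_e z_in by simp
    ultimately show False using U_def by auto
  qed
  show "mul x z = z"
  proof (rule ccontr)
    assume h: "mul x z \<noteq> z"
    then have "x \<noteq> z" using zz by auto
    then have xu: "x \<in> U" using x U_def by auto
    have "mul x z \<in> U" using h mul_cl z_in x U_def by auto
    then have "mul (inv x) (mul x z) \<in> U" using mul_U inv_U xu by blast
    moreover have "mul (inv x) (mul x z) = z" using mul_assoc[symmetric] z_in x inv[OF xu] mul_e z_in by simp
    ultimately show False using U_def by auto
  qed
qed

lemma inv_unique: "x \<in> U \<Longrightarrow> y \<in> S \<Longrightarrow> mul x y = e \<Longrightarrow> y = inv x"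
proof -
  assume x: "x \<in> U" and y: "y \<in> S" and h: "mul x y = e"
  have "y = mul (mul (inv x) x) y" using inv[OF x] mul_e y by simp
  also have "\<dots> = mul (inv x) (mul x y)" using mul_assoc[of "inv x" x y] inv[OF x] U_S[OF x] y by argo
  also have "\<dots> = inv x" using h mul_e inv[OF x] by simp
  finally show ?thesis .
qed

lemma inv_unique': "x \<in> U \<Longrightarrow> y \<in> S \<Longrightarrow> mul y x = e \<Longrightarrow> y = inv x"
proof -
  assume x: "x \<in> U" and y: "y \<in> S" and h: "mul y x = e"
  have "y = mul y (mul x (inv x))" using inv[OF x] mul_e y by simp
  also have "\<dots> = mul (mul y x) (inv x)" using mul_assoc[of y x "inv x"] inv[OF x] U_S[OF x] y by argo
  also have "\<dots> = inv x" using h mul_e inv[OF x] by simp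
  finally show ?thesis .
qed

lemma inv_inv: "x \<in> U \<Longrightarrow> inv (inv x) = x"
proof -
  assume x: "x \<in> U"
  show ?thesis using inv_unique[OF inv_U[OF x] U_S[OF x]] inv[OF x] by simp
qed

lemma inv_mul: "x \<in> U \<Longrightarrow> y \<in> U \<Longrightarrow> inv (mul x y) = mul (inv y) (inv x)"
proof -
  assume x: "x \<in> U" and y: "y \<in> U"
  have "mul (mul x y) (mul (inv y) (inv x)) = mul x (mul (mul y (inv y)) (inv x))"
    using mul_assoc[of x y "mul (inv y) (inv x)"] mul_assoc[of y "inv y" "inv x"] U_S x y inv mul_cl by simp
  also have "\<dots> = e" using inv x y mul_e by simp
  finally have "mul (mul x y) (mul (inv y) (inv x)) = e" .
  moreover have "mul (inv y) (inv x) \<in> S" using mul_cl inv x y by blast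
  ultimately show ?thesis using inv_unique[OF mul_U[OF x y]] by metis
qed

lemma inv_e: "inv e = e" using inv_unique[OF e_U e_in] mul_e e_in by simp

lemma cancel_l: "x \<in> U \<Longrightarrow> a \<in> S \<Longrightarrow> b \<in> S \<Longrightarrow> mul x a = mul x b \<Longrightarrow> a = b"
proof -
  assume x: "x \<in> U" and a: "a \<in> S" and b: "b \<in> S" and h: "mul x a = mul x b"
  have "mul (inv x) (mul x a) = mul (inv x) (mul x b)" using h by simp
  then have "mul (mul (inv x) x) a = mul (mul (inv x) x) b"
    using mul_assoc[of "inv x" x a] mul_assoc[of "inv x" x b] inv[OF x] U_S[OF x] a b by argo
  then show ?thesis using inv[OF x] mul_e a b by simp
qed
lemma cancel_r: "x \<in> U \<Longrightarrow> a \<in> S \<Longrightarrow> b \<in> S \<Longrightarrow> mul a x = mul b x \<Longrightarrow> a = b"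
proof -
  assume x: "x \<in> U" and a: "a \<in> S" and b: "b \<in> S" and h: "mul a x = mul b x"
  have "mul (mul a x) (inv x) = mul (mul b x) (inv x)" using h by simp
  then have "mul a (mul x (inv x)) = mul b (mul x (inv x))"
    using mul_assoc[of a x "inv x"] mul_assoc[of b x "inv x"] inv[OF x] U_S[OF x] a b by argo
  then show ?thesis using inv[OF x] mul_e a b by simp
qed

end

context dsa begin

definition le where "le x y \<longleftrightarrow> add x y = y"

lemma le_refl: "x \<in> S \<Longrightarrow> le x x" unfolding le_def by (rule idem)
lemma le_antisym: "x \<in> S \<Longrightarrow> y \<in> S \<Longrightarrow> le x y \<Longrightarrow> le y x \<Longrightarrow> x = y"
  unfolding le_def using add_comm by metis
lemma le_trans: "x \<in> S \<Longrightarrow> y \<in> S \<Longrightarrow> w \<in> S \<Longrightarrow> le x y \<Longrightarrow> le y w \<Longrightarrow> le x w"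
  unfolding le_def by (metis add_assoc)
lemma le_add1: "x \<in> S \<Longrightarrow> y \<in> S \<Longrightarrow> le x (add x y)"
  unfolding le_def by (metis add_assoc idem)
lemma le_add2: "x \<in> S \<Longrightarrow> y \<in> S \<Longrightarrow> le y (add x y)"
  using le_add1 add_comm by metis
lemma add_lub: "x \<in> S \<Longrightarrow> y \<in> S \<Longrightarrow> w \<in> S \<Longrightarrow> le x w \<Longrightarrow> le y w \<Longrightarrow> le (add x y) w"
  unfolding le_def by (metis add_assoc)
lemma mono_l: "x \<in> S \<Longrightarrow> y \<in> S \<Longrightarrow> w \<in> S \<Longrightarrow> le x y \<Longrightarrow> le (mul w x) (mul w y)"
  unfolding le_def by (metis distl)
lemma mono_r: "x \<in> S \<Longrightarrow> y \<in> S \<Longrightarrow> w \<in> S \<Longrightarrow> le x y \<Longrightarrow> le (mul x w) (mul y w)"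
  unfolding le_def by (metis distr)
lemma z_le: "x \<in> S \<Longrightarrow> le z x" unfolding le_def by (rule add_z1)
lemma sum_z: "x \<in> S \<Longrightarrow> y \<in> S \<Longrightarrow> add x y = z \<Longrightarrow> x = z"
proof -
  assume x: "x \<in> S" and y: "y \<in> S" and h: "add x y = z"
  have "le x z" using le_add1[OF x y] h by simp
  then have "add x z = z" unfolding le_def .
  then show ?thesis using add_z2[OF x] by simp
qed

definition pw where "pw x n = (mul x ^^ n) e"

lemma pw_0[simp]: "pw x 0 = e" unfolding pw_def by simp
lemma pw_Suc: "pw x (Suc n) = mul x (pw x n)" unfolding pw_def by simp
lemma pw_S: "x \<in> S \<Longrightarrow> pw x n \<in> S"
  by (induction n) (simp_all add: pw_Suc e_in mul_cl)
lemma pw_U: "x \<in> U \<Longrightarrow> pw x n \<in> U"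
  by (induction n) (simp_all add: pw_Suc e_U mul_U)
lemma pw_add: "x \<in> S \<Longrightarrow> pw x (m + n) = mul (pw x m) (pw x n)"
proof (induction m)
  case 0 then show ?case using mul_e1[OF pw_S] by simp
next
  case (Suc m)
  have "pw x (Suc m + n) = mul x (pw x (m + n))" by (simp add: pw_Suc)
  also have "\<dots> = mul x (mul (pw x m) (pw x n))" using Suc by simp
  also have "\<dots> = mul (mul x (pw x m)) (pw x n)" using mul_assoc pw_S Suc.prems by metis
  finally show ?case by (simp add: pw_Suc)
qed
lemma pw_1: "x \<in> S \<Longrightarrow> pw x 1 = x" using pw_Suc[of x 0] mul_e2 by simp
lemma pw_Suc': "x \<in> S \<Longrightarrow> pw x (Suc n) = mul (pw x n) x"
  using pw_add[of x n 1] pw_1 by simp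
lemma pw_mult: "x \<in> S \<Longrightarrow> pw x (m * n) = pw (pw x m) n"
proof (induction n)
  case 0 then show ?case by simp
next
  case (Suc n)
  have "pw x (m * Suc n) = pw x (m + m * n)" by simp
  also have "\<dots> = mul (pw x m) (pw x (m * n))" using pw_add Suc.prems by blast
  finally show ?case using Suc by (simp add: pw_Suc)
qed
lemma pw_le_e: "x \<in> S \<Longrightarrow> le x e \<Longrightarrow> le (pw x n) e"
proof (induction n)
  case 0 then show ?case using le_refl e_in by simp
next
  case (Suc n)
  have "le (mul x (pw x n)) (mul x e)" using mono_l[OF pw_S e_in] Suc by blast
  then have "le (mul x (pw x n)) x" using mul_e2 Suc.prems by simp
  then show ?case using le_trans[OF mul_cl[OF _ pw_S] _ e_in] Suc.prems by (simp add: pw_Suc)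
qed
lemma pw_ge_e: "x \<in> S \<Longrightarrow> le e x \<Longrightarrow> le e (pw x n)"
proof (induction n)
  case 0 then show ?case using le_refl e_in by simp
next
  case (Suc n)
  have "le (mul x e) (mul x (pw x n))" using mono_l[OF e_in pw_S] Suc by blast
  then have "le x (mul x (pw x n))" using mul_e2 Suc.prems by simp
  then show ?case using le_trans[OF e_in _ mul_cl[OF _ pw_S]] Suc.prems by (simp add: pw_Suc)
qed
lemma pw_mono: "x \<in> S \<Longrightarrow> y \<in> S \<Longrightarrow> le x y \<Longrightarrow> le (pw x n) (pw y n)"
proof (induction n)
  case 0 then show ?case using le_refl e_in by simp
next
  case (Suc n)
  have 1: "le (mul x (pw x n)) (mul y (pw x n))" using mono_r[OF _ _ pw_S] Suc.prems by blast
  have 2: "le (mul y (pw x n)) (mul y (pw y n))" using mono_l[OF pw_S pw_S] Suc by blast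
  show ?case using le_trans[OF _ _ _ 1 2] mul_cl pw_S Suc.prems by (simp add: pw_Suc)
qed
lemma pw_inv_mul: "x \<in> U \<Longrightarrow> mul (pw (inv x) n) (pw x n) = e"
proof (induction n)
  case 0 then show ?case using mul_e1 e_in by simp
next
  case (Suc n)
  have x: "x \<in> S" "inv x \<in> S" using Suc.prems U_S inv by auto
  have "mul (pw (inv x) (Suc n)) (pw x (Suc n)) = mul (mul (pw (inv x) n) (inv x)) (mul x (pw x n))"
    using pw_Suc' pw_Suc x by simp
  also have "\<dots> = mul (pw (inv x) n) (mul (mul (inv x) x) (pw x n))"
    using mul_assoc x pw_S mul_cl by metis
  also have "\<dots> = e" using inv[OF Suc.prems] mul_e1[OF pw_S[OF x(1)]] Suc by simp
  finally show ?case .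
qed
lemma pw_inv: "x \<in> U \<Longrightarrow> pw (inv x) n = inv (pw x n)"
  using inv_unique'[OF pw_U pw_S] pw_inv_mul inv U_S by metis

lemma comm_pw: "x \<in> S \<Longrightarrow> y \<in> S \<Longrightarrow> mul x y = mul y x \<Longrightarrow> mul y (pw x n) = mul (pw x n) y"
proof (induction n)
  case 0 then show ?case using mul_e by simp
next
  case (Suc n)
  have "mul y (mul x (pw x n)) = mul (mul y x) (pw x n)" using mul_assoc Suc.prems pw_S by metis
  also have "\<dots> = mul x (mul y (pw x n))" using mul_assoc Suc pw_S by metis
  also have "\<dots> = mul (mul x (pw x n)) y" using mul_assoc Suc pw_S by metis
  finally show ?case by (simp add: pw_Suc)
qed
lemma pw_comm_mul: "x \<in> S \<Longrightarrow> y \<in> S \<Longrightarrow> mul x y = mul y x \<Longrightarrow> pw (mul x y) n = mul (pw x n) (pw y n)"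
proof (induction n)
  case 0 then show ?case using mul_e e_in by simp
next
  case (Suc n)
  have c: "mul y (pw x n) = mul (pw x n) y" using comm_pw Suc.prems by blast
  have "pw (mul x y) (Suc n) = mul (mul x y) (mul (pw x n) (pw y n))" using Suc by (simp add: pw_Suc)
  also have "\<dots> = mul x (mul (mul y (pw x n)) (pw y n))" using mul_assoc Suc.prems pw_S mul_cl by metis
  also have "\<dots> = mul x (mul (mul (pw x n) y) (pw y n))" using c by simp
  also have "\<dots> = mul (mul x (pw x n)) (mul y (pw y n))" using mul_assoc Suc.prems pw_S mul_cl by metis
  finally show ?case by (simp add: pw_Suc)
qed

end

context dsa begin

lemma L_aux: "A \<in> S \<Longrightarrow> B \<in> S \<Longrightarrow> le A e \<Longrightarrow> le B e \<Longrightarrow> add A B = e \<Longrightarrow> add (pw A m) B = e"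
proof (induction m)
  case 0 then show ?case using add_comm[OF e_in] \<open>le B e\<close> unfolding le_def by simp
next
  case (Suc m)
  have AS: "A \<in> S" "B \<in> S" "pw A m \<in> S" "pw A (Suc m) \<in> S" using Suc.prems pw_S by auto
  have "mul A (add (pw A m) B) = A" using Suc mul_e2 AS by simp
  then have 1: "add (pw A (Suc m)) (mul A B) = A" using distl AS by (simp add: pw_Suc)
  have "le (mul A B) (mul e B)" using mono_r AS e_in Suc.prems by blast
  then have "le (mul A B) B" using mul_e1 AS by simp
  then have "le (add (pw A (Suc m)) (mul A B)) (add (pw A (Suc m)) B)"
    using add_lub le_add1 le_add2 le_trans AS mul_cl add_cl by metis
  then have 2: "le A (add (pw A (Suc m)) B)" using 1 by simp
  have 3: "le B (add (pw A (Suc m)) B)" using le_add2 AS by blast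
  have ge: "le e (add (pw A (Suc m)) B)" using add_lub[OF AS(1,2) add_cl[OF AS(4,2)] 2 3] Suc.prems by simp
  have le: "le (add (pw A (Suc m)) B) e" using add_lub[OF AS(4,2) e_in pw_le_e[OF AS(1)]] Suc.prems by blast
  show ?case using le_antisym[OF add_cl[OF AS(4,2)] e_in le ge] .
qed

lemma key: assumes y: "y \<in> U" and k: "0 < k" and h: "le (pw y k) e" shows "le y e"
proof -
  have yS: "y \<in> S" using y U_S by blast
  have iy: "inv y \<in> U" "inv y \<in> S" "mul y (inv y) = e" "mul (inv y) y = e" using inv[OF y] inv_U[OF y] by auto
  define r where "r = add (inv y) e"
  define p where "p = add y e"
  have rS: "r \<in> S" and pS: "p \<in> S" unfolding r_def p_def using add_cl iy yS e_in by auto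
  have rge: "le e r" and pge: "le e p" unfolding r_def p_def using le_add2 iy yS e_in by auto
  have rU: "r \<in> U"
  proof -
    have "r \<noteq> z" proof
      assume "r = z" then have "add e (inv y) = z" using add_comm iy e_in r_def by metis
      then show False using sum_z[OF e_in iy(2)] z_ne_e by simp
    qed
    then show ?thesis using rS U_def by blast
  qed
  have pU: "p \<in> U"
  proof -
    have "p \<noteq> z" proof
      assume "p = z" then have "add e y = z" using add_comm yS e_in p_def by metis
      then show False using sum_z[OF e_in yS] z_ne_e by simp
    qed
    then show ?thesis using pS U_def by blast
  qed
  have yr: "mul y r = p" unfolding r_def p_def using distl[OF yS iy(2) e_in] iy mul_e2[OF yS] add_comm[OF e_in yS] by simp
  have ry: "mul r y = p" unfolding r_def p_def using distr[OF iy(2) e_in yS] iy mul_e1[OF yS] add_comm[OF e_in yS] by simp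
  have pr1: "mul p r = add p r" using distr[OF yS e_in rS] yr mul_e1[OF rS] p_def by simp
  have pr2: "mul r p = add p r" using distl[OF rS yS e_in] ry mul_e2[OF rS] p_def by simp
  have pr: "mul p r = mul r p" using pr1 pr2 by simp
  define A where "A = inv p"
  define B where "B = inv r"
  have AU: "A \<in> U" and BU: "B \<in> U" unfolding A_def B_def using inv_U pU rU by auto
  have AS: "A \<in> S" and BS: "B \<in> S" using AU BU U_S by auto
  have Ap: "mul A p = e" "mul p A = e" unfolding A_def using inv[OF pU] by auto
  have Br: "mul B r = e" "mul r B = e" unfolding B_def using inv[OF rU] by auto
  have A_eq: "A = mul B (inv y)" unfolding A_def B_def using inv_mul[OF y rU] yr by simp
  have AB: "add A B = e"
  proof -
    have "add A B = add (mul B (inv y)) (mul B e)" using A_eq mul_e2[OF BS] by simp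
    also have "\<dots> = mul B r" using distl[OF BS iy(2) e_in] r_def by simp
    finally show ?thesis using Br by simp
  qed
  have Ale: "le A e" using mono_l[OF e_in pS AS pge] Ap mul_e2[OF AS] by simp
  have Ble: "le B e" using mono_l[OF e_in rS BS rge] Br mul_e2[OF BS] by simp
  have L1: "add (pw A k) B = e" using L_aux[OF AS BS Ale Ble AB] .
  have L2: "add (pw B k) (pw A k) = e"
    using L_aux[OF BS pw_S[OF AS] Ble pw_le_e[OF AS Ale]] L1 add_comm[OF pw_S[OF AS] BS] by simp
  have y_eq: "y = mul p B"
  proof -
    have "mul p B = mul (mul y r) B" using yr by simp
    also have "\<dots> = mul y (mul r B)" using mul_assoc yS rS BS by blast
    finally show ?thesis using Br mul_e2[OF yS] by simp
  qed
  have pB: "mul p B = mul B p"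
  proof -
    have "mul B p = mul B (mul p (mul r B))" using Br mul_e2[OF pS] by simp
    also have "\<dots> = mul B (mul (mul p r) B)" using mul_assoc pS rS BS by simp
    also have "\<dots> = mul B (mul (mul r p) B)" using pr by simp
    also have "\<dots> = mul (mul B r) (mul p B)" using mul_assoc pS rS BS mul_cl by metis
    finally show ?thesis using Br mul_e1 mul_cl pS BS by simp
  qed
  have ypw: "pw y k = mul (pw p k) (pw B k)" using y_eq pw_comm_mul[OF pS BS pB] by simp
  have Apw: "mul (pw A k) (pw p k) = e" unfolding A_def using pw_inv_mul[OF pU] .
  have "mul (pw A k) (pw y k) = mul (mul (pw A k) (pw p k)) (pw B k)"
    using ypw mul_assoc pw_S AS pS BS by metis
  then have c: "mul (pw A k) (pw y k) = pw B k" using Apw mul_e1 pw_S BS by simp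
  have "le (mul (pw A k) (pw y k)) (mul (pw A k) e)" using mono_l[OF pw_S[OF yS] e_in pw_S[OF AS] h] .
  then have "le (pw B k) (pw A k)" using c mul_e2 pw_S AS by simp
  then have Ak: "pw A k = e" using L2 unfolding le_def by simp
  obtain k' where k': "k = Suc k'" using k by (cases k) auto
  have "le (mul A (pw A k')) (mul A e)" using mono_l[OF pw_S[OF AS] e_in AS pw_le_e[OF AS Ale]] .
  then have "le e A" using Ak k' mul_e2[OF AS] by (simp add: pw_Suc)
  then have "A = e" using le_antisym[OF AS e_in Ale] by simp
  then have "p = e" unfolding A_def using inv_inv[OF pU] inv_e by metis
  then show ?thesis unfolding p_def le_def .
qed

end

context dsa begin

definition T where "T c = f (Some c)"

lemma T_add: "T (a + b) = mul (T a) (T b)"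
  unfolding T_def using f_mul[of "Some a" "Some b"] by (simp add: zmax_mul_def)
lemma T_0: "T 0 = e" unfolding T_def by (rule f_0)
lemma T_S: "T c \<in> S" unfolding T_def by (rule f_in)
lemma T_U: "T c \<in> U"
proof -
  have "T c \<noteq> z" unfolding T_def using injf f_None by (metis inj_eq option.distinct(1))
  then show ?thesis using T_S U_def by blast
qed
lemma T_addmax: "add (T a) (T b) = T (max a b)"
  unfolding T_def using f_add[of "Some a" "Some b"] by (simp add: zmax_add_def)
lemma T_inj: "T a = T b \<Longrightarrow> a = b"
  unfolding T_def using injf by (metis inj_eq option.inject)
lemma T_le: "le (T a) (T b) \<longleftrightarrow> a \<le> b"
proof
  assume "le (T a) (T b)"
  then have "T (max a b) = T b" unfolding le_def T_addmax .
  then have "max a b = b" by (rule T_inj)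
  then show "a \<le> b" by (simp add: max_def split: if_splits)
next
  assume "a \<le> b" then show "le (T a) (T b)" unfolding le_def T_addmax by (simp add: max_def)
qed
lemma pw_T: "pw (T c) n = T (c * int n)"
proof (induction n)
  case 0 then show ?case using T_0 by simp
next
  case (Suc n)
  have "pw (T c) (Suc n) = mul (T c) (T (c * int n))" using Suc by (simp add: pw_Suc)
  also have "\<dots> = T (c + c * int n)" using T_add by simp
  finally show ?case by (simp add: algebra_simps)
qed
lemma T_inv: "inv (T c) = T (- c)"
proof -
  have "mul (T c) (T (-c)) = e" using T_add[of c "-c"] T_0 by simp
  then show ?thesis using inv_unique[OF T_U T_S] by metis
qed

lemma units_eq: "units_on S mul e = U"
proof
  show "units_on S mul e \<subseteq> U"
    unfolding units_on_def U_def using z_not_unit by auto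
  show "U \<subseteq> units_on S mul e"
    unfolding units_on_def using unit_ex U_S by blast
qed

definition C where "C x = {mul x (f (Some k)) | k. True}"

lemma cosets_eq: "unit_cosets S mul e f = C ` U"
  unfolding unit_cosets_def C_def units_eq ..

lemma finC: "finite (C ` U)" using Fin cosets_eq by simp

lemma C_mem: "x \<in> S \<Longrightarrow> x \<in> C x"
proof -
  assume x: "x \<in> S"
  have "x = mul x (f (Some 0))" using mul_e2[OF x] f_0 by simp
  then show ?thesis unfolding C_def by blast
qed

lemma C_eqD: "x \<in> S \<Longrightarrow> C x = C y \<Longrightarrow> \<exists>c. x = mul y (T c)"
  using C_mem unfolding C_def T_def by blast

lemma power_in_T: assumes x: "x \<in> U" shows "\<exists>k>0. \<exists>j. pw x k = T j"
proof -
  define g where "g i = C (pw x i)" for i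
  have "range g \<subseteq> C ` U" unfolding g_def using pw_U[OF x] by blast
  then have fin: "finite (range g)" using finite_subset finC by blast
  have "\<not> inj g"
  proof
    assume "inj g"
    then have "infinite (range g)" using finite_imageD infinite_UNIV_nat by blast
    then show False using fin by simp
  qed
  then obtain i j where ij: "i \<noteq> j" "g i = g j" unfolding inj_def by blast
  obtain a b where ab: "a < b" "g a = g b"
  proof (cases "i < j")
    case True then show ?thesis using that ij by blast
  next
    case False then have "j < i" using ij by simp
    then show ?thesis using that ij by metis
  qed
  have xS: "x \<in> S" using x U_S by blast
  obtain c where c: "pw x b = mul (pw x a) (T c)" using C_eqD[OF pw_S[OF xS]] ab unfolding g_def by metis
  have "pw x b = mul (pw x a) (pw x (b - a))" using pw_add[OF xS, of a "b - a"] ab by simp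
  then have "pw x (b - a) = T c" using cancel_l[OF pw_U[OF x] pw_S[OF xS] T_S] c by metis
  then show ?thesis using ab by (intro exI[of _ "b - a"]) auto
qed

lemma tot_e: assumes x: "x \<in> U" shows "le x e \<or> le e x"
proof -
  have xS: "x \<in> S" using x U_S by blast
  obtain k j where kj: "k > 0" "pw x k = T j" using power_in_T[OF x] by blast
  show ?thesis
  proof (cases "j \<le> 0")
    case True
    then have "le (pw x k) e" using kj T_le[of j 0] T_0 by simp
    then show ?thesis using key[OF x kj(1)] by simp
  next
    case False
    have "pw (inv x) k = T (-j)" using pw_inv[OF x] kj T_inv by simp
    then have "le (pw (inv x) k) e" using False T_le[of "-j" 0] T_0 by simp
    then have "le (inv x) e" using key[OF inv_U[OF x] kj(1)] by simp
    then have "le (mul x (inv x)) (mul x e)" using mono_l inv x xS e_in by blast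
    then show ?thesis using inv[OF x] mul_e2[OF xS] by simp
  qed
qed

lemma tot: assumes x: "x \<in> S" and y: "y \<in> S" shows "le x y \<or> le y x"
proof (cases "x = z \<or> y = z")
  case True then show ?thesis using z_le x y by blast
next
  case False
  then have xu: "x \<in> U" and yu: "y \<in> U" using x y U_def by auto
  define w where "w = mul x (inv y)"
  have wU: "w \<in> U" unfolding w_def using mul_U xu inv_U yu by blast
  have wS: "w \<in> S" using wU U_S by blast
  have wy: "mul w y = x" unfolding w_def using mul_assoc x inv[OF yu] y mul_e2 by simp
  show ?thesis
  proof (cases "le w e")
    case True
    then have "le (mul w y) (mul e y)" using mono_r wS e_in y by blast
    then show ?thesis using wy mul_e1 y by simp
  next
    case False
    then have "le e w" using tot_e wU by blast
    then have "le (mul e y) (mul w y)" using mono_r wS e_in y by blast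
    then show ?thesis using wy mul_e1 y by simp
  qed
qed

lemma inv_anti: assumes a: "a \<in> U" and b: "b \<in> U" and h: "le a b" shows "le (inv b) (inv a)"
proof -
  have aS: "a \<in> S" and bS: "b \<in> S" using a b U_S by auto
  have ia: "inv a \<in> S" and ib: "inv b \<in> S" using inv a b by auto
  have "le (mul (inv b) a) (mul (inv b) b)" using mono_l[OF aS bS ib h] .
  then have 1: "le (mul (inv b) a) e" using inv[OF b] by simp
  have "le (mul (mul (inv b) a) (inv a)) (mul e (inv a))" using mono_r[OF mul_cl[OF ib aS] e_in ia 1] .
  moreover have "mul (mul (inv b) a) (inv a) = inv b" using mul_assoc ib aS ia inv[OF a] mul_e2 by simp
  ultimately show ?thesis using mul_e1 ia by simp
qed

lemma arch_up: assumes h: "h \<in> U" and he: "le e h" and hne: "h \<noteq> e" and x: "x \<in> U"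
  shows "\<exists>b. le x (pw h b)"
proof -
  have hS: "h \<in> S" and xS: "x \<in> S" using h x U_S by auto
  obtain k j where kj: "k > 0" "pw h k = T j" using power_in_T[OF h] by blast
  have j: "j > 0"
  proof (rule ccontr)
    assume "\<not> j > 0"
    then have "le (pw h k) e" using kj T_le[of j 0] T_0 by simp
    then have "le h e" using key[OF h kj(1)] by simp
    then show False using le_antisym[OF hS e_in _ he] hne by simp
  qed
  obtain k' j' where kj': "k' > 0" "pw x k' = T j'" using power_in_T[OF x] by blast
  define m where "m = nat \<bar>j'\<bar> + 1"
  show ?thesis
  proof (rule ccontr)
    assume "\<nexists>b. le x (pw h b)"
    then have "\<not> le x (pw h (k * m))" by blast
    then have "le (pw h (k * m)) x" using tot xS pw_S[OF hS] by blast
    then have "le (pw (pw h (k * m)) k') (pw x k')" using pw_mono pw_S hS xS by blast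
    moreover have "pw (pw h (k * m)) k' = T (j * int (m * k'))"
    proof -
      have "pw (pw h (k * m)) k' = pw h (k * m * k')" using pw_mult[OF hS] by simp
      also have "\<dots> = pw (pw h k) (m * k')" using pw_mult[OF hS] by (simp add: mult.assoc)
      finally show ?thesis using kj pw_T by simp
    qed
    ultimately have "j * int (m * k') \<le> j'" using kj' T_le by simp
    moreover have "int (m * k') \<ge> int m"
    proof -
      have "m * 1 \<le> m * k'" using kj'(1) by (intro mult_le_mono2) simp
      then show ?thesis by (metis mult_1_right of_nat_le_iff)
    qed
    moreover have "j * int (m * k') \<ge> int (m * k')"
    proof -
      have "1 * int (m * k') \<le> j * int (m * k')" using j by (intro mult_right_mono) auto
      then show ?thesis by simp
    qed
    moreover have "int m > j'" unfolding m_def by simp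
    ultimately show False by linarith
  qed
qed

lemma arch_down: assumes h: "h \<in> U" and he: "le e h" and hne: "h \<noteq> e" and x: "x \<in> U"
  shows "\<exists>b. le (pw (inv h) b) x"
proof -
  obtain b where "le (inv x) (pw h b)" using arch_up[OF h he hne inv_U[OF x]] by blast
  then have "le (inv (pw h b)) (inv (inv x))" using inv_anti inv_U x pw_U h by blast
  then show ?thesis using inv_inv[OF x] pw_inv[OF h] by metis
qed

end

context dsa begin

definition zpw where "zpw x a = (if 0 \<le> a then pw x (nat a) else pw (inv x) (nat (- a)))"

lemma inv_cancel1: "x \<in> U \<Longrightarrow> w \<in> S \<Longrightarrow> mul (inv x) (mul x w) = w"
proof -
  assume x: "x \<in> U" and w: "w \<in> S"
  have "mul (inv x) (mul x w) = mul (mul (inv x) x) w" using mul_assoc[of "inv x" x w] inv[OF x] U_S[OF x] w by simp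
  also have "\<dots> = w" using inv[OF x] mul_e1[OF w] by simp
  finally show ?thesis .
qed
lemma inv_cancel2: "x \<in> U \<Longrightarrow> w \<in> S \<Longrightarrow> mul x (mul (inv x) w) = w"
proof -
  assume x: "x \<in> U" and w: "w \<in> S"
  have "mul x (mul (inv x) w) = mul (mul x (inv x)) w" using mul_assoc[of x "inv x" w] inv[OF x] U_S[OF x] w by simp
  also have "\<dots> = w" using inv[OF x] mul_e1[OF w] by simp
  finally show ?thesis .
qed

lemma zpw_U: "x \<in> U \<Longrightarrow> zpw x a \<in> U"
  unfolding zpw_def using pw_U inv_U by auto
lemma zpw_S: "x \<in> U \<Longrightarrow> zpw x a \<in> S"
  using zpw_U U_S by blast
lemma zpw_0: "zpw x 0 = e" unfolding zpw_def by simp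
lemma zpw_nat: "zpw x (int n) = pw x n" unfolding zpw_def by simp
lemma zpw_neg: "zpw x (- int n) = pw (inv x) n" unfolding zpw_def
  by (cases "n = 0") simp_all

lemma zpw_succ: assumes x: "x \<in> U" shows "zpw x (a + 1) = mul x (zpw x a)"
proof -
  have xS: "x \<in> S" using x U_S by blast
  consider "0 \<le> a" | "a = -1" | "a < -1" by linarith
  then show ?thesis
  proof cases
    case 1
    then have "nat (a + 1) = Suc (nat a)" by simp
    then show ?thesis using 1 unfolding zpw_def by (simp add: pw_Suc)
  next
    case 2
    then show ?thesis unfolding zpw_def using pw_1 inv[OF x] by simp
  next
    case 3
    then obtain m where m: "nat (- a) = Suc m" "nat (-(a+1)) = m" by (intro that[of "nat (-a - 1)"]) auto
    have "mul x (zpw x a) = mul x (mul (inv x) (pw (inv x) m))" using 3 m unfolding zpw_def by (simp add: pw_Suc)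
    also have "\<dots> = pw (inv x) m" using inv_cancel2[OF x pw_S] inv[OF x] by simp
    finally show ?thesis using 3 m unfolding zpw_def by simp
  qed
qed

lemma zpw_pred: assumes x: "x \<in> U" shows "zpw x (a - 1) = mul (inv x) (zpw x a)"
proof -
  have xS: "x \<in> S" using x U_S by blast
  have "zpw x a = mul x (zpw x (a - 1))" using zpw_succ[OF x, of "a - 1"] by simp
  then show ?thesis using inv_cancel1[OF x zpw_S[OF x]] by simp
qed

lemma zpw_add: assumes x: "x \<in> U" shows "zpw x (a + b) = mul (zpw x a) (zpw x b)"
proof (induction a rule: int_induct[where k = 0])
  case base then show ?case using zpw_0 mul_e1 zpw_S[OF x] by simp
next
  case (step1 i)
  have xS: "x \<in> S" using x U_S by blast
  have "zpw x (i + 1 + b) = mul x (zpw x (i + b))" using zpw_succ[OF x, of "i + b"] by (simp add: algebra_simps)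
  also have "\<dots> = mul (mul x (zpw x i)) (zpw x b)" using step1 mul_assoc xS zpw_S[OF x] by simp
  finally show ?case using zpw_succ[OF x] by simp
next
  case (step2 i)
  have xS: "inv x \<in> S" using inv x by blast
  have "zpw x (i - 1 + b) = mul (inv x) (zpw x (i + b))" using zpw_pred[OF x, of "i + b"] by (simp add: algebra_simps)
  also have "\<dots> = mul (mul (inv x) (zpw x i)) (zpw x b)" using step2 mul_assoc xS zpw_S[OF x] by simp
  finally show ?case using zpw_pred[OF x] by simp
qed

lemma zpw_1: "x \<in> U \<Longrightarrow> zpw x 1 = x" using zpw_nat[of x 1] pw_1 U_S by simp

lemma hom_unique: assumes x: "x \<in> U" and phiS: "\<And>a. phi a \<in> S" and p0: "phi 0 = e"
  and ps: "\<And>a. phi (a + 1) = mul x (phi a)" shows "phi a = zpw x a"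
proof (induction a rule: int_induct[where k = 0])
  case base then show ?case using p0 zpw_0 by simp
next
  case (step1 i) then show ?case using ps zpw_succ[OF x] by simp
next
  case (step2 i)
  have xS: "x \<in> S" using x U_S by blast
  have "phi i = mul x (phi (i - 1))" using ps[of "i - 1"] by simp
  then have "phi (i - 1) = mul (inv x) (phi i)" using inv_cancel1[OF x phiS] by simp
  then show ?case using step2 zpw_pred[OF x] by simp
qed

lemma T_zpw: "T c = zpw (T 1) c"
proof -
  have h: "\<And>a. T (a + 1) = mul (T 1) (T a)" using T_add[of 1] by (simp add: add.commute)
  show ?thesis by (rule hom_unique[of "T 1" T, OF T_U T_S T_0 h])
qed

section \<open>Powers of an element above e\<close>

lemma zpw_mono: assumes g: "g \<in> U" and ge: "le e g" and ab: "a \<le> b"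
  shows "le (zpw g a) (zpw g b)"
proof -
  have gS: "g \<in> S" using g U_S by blast
  have "zpw g b = mul (zpw g a) (zpw g (b - a))" using zpw_add[OF g, of a "b - a"] by simp
  also have "zpw g (b - a) = pw g (nat (b - a))" using zpw_nat[of g "nat (b - a)"] ab by simp
  finally have 1: "zpw g b = mul (zpw g a) (pw g (nat (b - a)))" .
  have "le (mul (zpw g a) e) (mul (zpw g a) (pw g (nat (b - a))))"
    using mono_l[OF e_in pw_S[OF gS] zpw_S[OF g] pw_ge_e[OF gS ge]] .
  then show ?thesis using 1 mul_e2 zpw_S[OF g] by simp
qed

lemma zpw_strict: assumes g: "g \<in> U" and ge: "le e g" and gne: "g \<noteq> e" and ab: "a < b"
  shows "zpw g a \<noteq> zpw g b"
proof
  assume eq: "zpw g a = zpw g b"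
  have gS: "g \<in> S" using g U_S by blast
  obtain m where m: "nat (b - a) = Suc m" using ab by (intro that[of "nat (b - a) - 1"]) auto
  have "zpw g b = mul (zpw g a) (zpw g (b - a))" using zpw_add[OF g, of a "b - a"] by simp
  also have "zpw g (b - a) = pw g (Suc m)"
  proof -
    have "b - a = int (nat (b - a))" using ab by simp
    then have "b - a = int (Suc m)" using m by simp
    then show ?thesis using zpw_nat[of g "Suc m"] by (simp only:)
  qed
  finally have fb: "zpw g b = mul (zpw g a) (pw g (Suc m))" .
  have "mul (zpw g a) e = zpw g a" using mul_e2 zpw_S[OF g] by blast
  also have "\<dots> = zpw g b" by (rule eq)
  finally have "mul (zpw g a) e = mul (zpw g a) (pw g (Suc m))" using fb by (rule trans)
  then have "e = pw g (Suc m)" by (rule cancel_l[OF zpw_U[OF g] e_in pw_S[OF gS]])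
  then have pe: "pw g (Suc m) = e" by (rule sym)
  have "le (mul g e) (mul g (pw g m))" using mono_l[OF e_in pw_S[OF gS] gS pw_ge_e[OF gS ge]] .
  then have "le g e" using pe mul_e2[OF gS] by (simp add: pw_Suc)
  then show False using le_antisym[OF gS e_in _ ge] gne by simp
qed

lemma zpw_le_iff: assumes g: "g \<in> U" and ge: "le e g" and gne: "g \<noteq> e"
  shows "le (zpw g a) (zpw g b) \<longleftrightarrow> a \<le> b"
proof
  assume h: "le (zpw g a) (zpw g b)"
  show "a \<le> b"
  proof (rule ccontr)
    assume "\<not> a \<le> b"
    then have "b < a" by simp
    then have 1: "le (zpw g b) (zpw g a)" using zpw_mono[OF g ge] by simp
    have 2: "zpw g b \<noteq> zpw g a" using zpw_strict[OF g ge gne \<open>b < a\<close>] .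
    show False using le_antisym[OF zpw_S[OF g] zpw_S[OF g] h 1] 2 by simp
  qed
qed (rule zpw_mono[OF g ge])

lemma zpw_inj: assumes g: "g \<in> U" and ge: "le e g" and gne: "g \<noteq> e"
  shows "zpw g a = zpw g b \<longleftrightarrow> a = b"
proof
  assume h: "zpw g a = zpw g b"
  show "a = b"
  proof (rule ccontr)
    assume "a \<noteq> b"
    then have "a < b \<or> b < a" by linarith
    then show False using zpw_strict[OF g ge gne, of a b] zpw_strict[OF g ge gne, of b a] h by metis
  qed
qed simp

section \<open>The finite set P and its minimum\<close>

definition t where "t = T 1"

definition P where "P = {x \<in> U. x \<noteq> e \<and> le e x \<and> le x t}"

lemma tU: "t \<in> U" and tS: "t \<in> S" unfolding t_def using T_U T_S by auto

lemma finite_P: "finite P"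
proof -
  have inj: "inj_on C P"
  proof (rule inj_onI)
    fix x y assume x: "x \<in> P" and y: "y \<in> P" and eq: "C x = C y"
    have xU: "x \<in> U" and yU: "y \<in> U" using x y P_def by auto
    have xS: "x \<in> S" and yS: "y \<in> S" using xU yU U_S by auto
    have xp: "x \<noteq> e" "le e x" "le x t" and yp: "y \<noteq> e" "le e y" "le y t" using x y P_def by auto
    obtain c where c: "x = mul y (T c)" using C_eqD[OF xS eq] by blast
    consider "c \<ge> 1" | "c \<le> -1" | "c = 0" by linarith
    then show "x = y"
    proof cases
      case 1
      have "le t (T c)" unfolding t_def using T_le 1 by simp
      then have a: "le (mul y t) x" using mono_l[OF tS T_S yS] c by simp
      have "le (mul e t) (mul y t)" using mono_r[OF e_in yS tS yp(2)] .
      then have b: "le t (mul y t)" using mul_e1 tS by simp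
      have "le t x" using le_trans[OF tS mul_cl[OF yS tS] xS b a] .
      then have xt: "x = t" using le_antisym[OF xS tS xp(3)] by simp
      have "mul y t = t" using le_antisym[OF mul_cl[OF yS tS] tS] a b xt by simp
      then have "mul y t = mul e t" using mul_e1 tS by simp
      then have "y = e" using cancel_r[OF tU yS e_in] by simp
      then show ?thesis using yp by simp
    next
      case 2
      have "le (T c) (T (-1))" using T_le 2 by simp
      then have a: "le x (mul y (T (-1)))" using mono_l[OF T_S T_S yS] c by simp
      have b: "le (mul y (T (-1))) (mul t (T (-1)))" using mono_r[OF yS tS T_S yp(3)] .
      have "mul t (T (-1)) = e" unfolding t_def using T_add[of 1 "-1"] T_0 by simp
      then have "le x e" using le_trans[OF xS mul_cl[OF yS T_S] e_in a] b by simp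
      then have "x = e" using le_antisym[OF xS e_in _ xp(2)] by simp
      then show ?thesis using xp by simp
    next
      case 3 then show ?thesis using c T_0 mul_e2 yS by simp
    qed
  qed
  have sub: "C ` P \<subseteq> C ` U" unfolding P_def by blast
  show ?thesis by (rule inj_on_finite[OF inj sub finC])
qed

lemma t_in_P: "t \<in> P"
proof -
  have "t \<noteq> e" unfolding t_def using T_inj T_0 by fastforce
  moreover have "le e t" unfolding t_def using T_le[of 0 1] T_0 by simp
  ultimately show ?thesis unfolding P_def using tU le_refl tS by blast
qed

lemma exists_min: "finite A \<Longrightarrow> A \<noteq> {} \<Longrightarrow> A \<subseteq> S \<Longrightarrow> \<exists>m\<in>A. \<forall>x\<in>A. le m x"
proof (induction A rule: finite_ne_induct)
  case (singleton x) then show ?case using le_refl by auto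
next
  case (insert x F)
  obtain m where m: "m \<in> F" "\<forall>y\<in>F. le m y" using insert by auto
  have xS: "x \<in> S" and mS: "m \<in> S" and FS: "F \<subseteq> S" using insert m by auto
  show ?case
  proof (cases "le x m")
    case True
    then have "\<forall>y\<in>insert x F. le x y" using m le_trans[OF xS mS] FS le_refl[OF xS] by blast
    then show ?thesis by blast
  next
    case False
    then have "le m x" using tot xS mS by blast
    then show ?thesis using m by blast
  qed
qed

definition g where "g = (SOME m. m \<in> P \<and> (\<forall>x\<in>P. le m x))"

lemma g_prop: "g \<in> P" "\<forall>x\<in>P. le g x"
proof -
  have "\<exists>m. m \<in> P \<and> (\<forall>x\<in>P. le m x)" using exists_min[OF finite_P] t_in_P P_def U_S by blast
  then have "g \<in> P \<and> (\<forall>x\<in>P. le g x)" unfolding g_def by (rule someI_ex)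
  then show "g \<in> P" "\<forall>x\<in>P. le g x" by auto
qed

lemma gU: "g \<in> U" and gS: "g \<in> S" and g_ne: "g \<noteq> e" and g_ge: "le e g" and g_le_t: "le g t"
  using g_prop(1) P_def U_S by auto

lemma all_powers: assumes x: "x \<in> U" shows "\<exists>a. x = zpw g a"
proof -
  have xS: "x \<in> S" using x U_S by blast
  obtain b where b: "le x (pw g b)" using arch_up[OF gU g_ge g_ne x] by blast
  obtain b' where b': "le (pw (inv g) b') x" using arch_down[OF gU g_ge g_ne x] by blast
  have ub: "a \<le> int b" if "le (zpw g a) x" for a
  proof -
    have "le x (zpw g (int b))" using b zpw_nat[of g b] by simp
    then have "le (zpw g a) (zpw g (int b))" using le_trans[OF zpw_S[OF gU] xS zpw_S[OF gU] that] by blast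
    then show ?thesis using zpw_le_iff[OF gU g_ge g_ne] by simp
  qed
  define A where "A = {a \<in> {- int b' .. int b}. le (zpw g a) x}"
  have lo: "le (zpw g (- int b')) x" using b' zpw_neg[of g b'] by simp
  have Ain: "- int b' \<in> A" unfolding A_def using lo ub[OF lo] by simp
  have finA: "finite A" unfolding A_def by (rule finite_subset[of _ "{- int b' .. int b}"]) auto
  define a0 where "a0 = Max A"
  have Ane: "A \<noteq> {}" using Ain by blast
  have a0A: "a0 \<in> A" unfolding a0_def by (rule Max_in[OF finA Ane])
  have a0le: "le (zpw g a0) x" using a0A A_def by simp
  have not1: "\<not> le (zpw g (a0 + 1)) x"
  proof
    assume h: "le (zpw g (a0 + 1)) x"
    then have "a0 + 1 \<in> A" using ub[OF h] a0A unfolding A_def by simp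
    then have "a0 + 1 \<le> a0" unfolding a0_def by (rule Max_ge[OF finA])
    then show False by simp
  qed
  have xle: "le x (zpw g (a0 + 1))" using tot[OF xS zpw_S[OF gU]] not1 by blast
  have xne: "x \<noteq> zpw g (a0 + 1)"
  proof
    assume "x = zpw g (a0 + 1)"
    then have "le (zpw g (a0 + 1)) x" using le_refl[OF xS] by simp
    then show False using not1 by simp
  qed
  define y where "y = mul (zpw g (- a0)) x"
  have yS: "y \<in> S" unfolding y_def using mul_cl zpw_S[OF gU] xS by blast
  have inv0: "mul (zpw g (- a0)) (zpw g a0) = e" using zpw_add[OF gU, of "- a0" a0] zpw_0 by simp
  have inv1: "mul (zpw g a0) (zpw g (- a0)) = e" using zpw_add[OF gU, of a0 "- a0"] zpw_0 by simp
  have "mul (zpw g a0) y = mul (mul (zpw g a0) (zpw g (- a0))) x" unfolding y_def by (rule mul_assoc[OF zpw_S[OF gU] zpw_S[OF gU] xS, symmetric])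
  also have "\<dots> = x" using inv1 mul_e1[OF xS] by simp
  finally have xy: "x = mul (zpw g a0) y" by (rule sym)
  have "le (mul (zpw g (- a0)) (zpw g a0)) y" unfolding y_def using mono_l[OF zpw_S[OF gU] xS zpw_S[OF gU] a0le] .
  then have ey: "le e y" using inv0 by simp
  have "le y (mul (zpw g (- a0)) (zpw g (a0 + 1)))" unfolding y_def using mono_l[OF xS zpw_S[OF gU] zpw_S[OF gU] xle] .
  moreover have "mul (zpw g (- a0)) (zpw g (a0 + 1)) = g" using zpw_add[OF gU, of "- a0" "a0 + 1"] zpw_1[OF gU] by simp
  ultimately have yg: "le y g" by simp
  have "y \<noteq> g"
  proof
    assume "y = g"
    then have "x = zpw g (a0 + 1)" using xy zpw_add[OF gU, of a0 1] zpw_1[OF gU] by simp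
    then show False using xne by simp
  qed
  have "y = e"
  proof (rule ccontr)
    assume yne: "y \<noteq> e"
    have "y \<noteq> z"
    proof
      assume "y = z"
      then have "add e z = z" using ey unfolding le_def by simp
      then show False using add_z2[OF e_in] z_ne_e by simp
    qed
    then have "y \<in> U" using yS U_def by blast
    moreover have "le y t" using le_trans[OF yS gS tS yg g_le_t] .
    ultimately have "y \<in> P" unfolding P_def using yne ey by blast
    then have "le g y" using g_prop(2) by blast
    then show False using le_antisym[OF yS gS yg] \<open>y \<noteq> g\<close> by simp
  qed
  then have "x = zpw g a0" using xy mul_e2[OF zpw_S[OF gU]] by simp
  then show ?thesis by blast
qed

end

context dsa begin

definition a0 where "a0 = (SOME a. t = zpw g a)"

lemma t_zpw: "t = zpw g a0"
  unfolding a0_def using all_powers[OF tU] by (rule someI_ex)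

lemma a0_pos: "a0 \<ge> 1"
proof -
  have "le (zpw g 1) (zpw g a0)" using g_le_t t_zpw zpw_1[OF gU] by simp
  then show ?thesis using zpw_le_iff[OF gU g_ge g_ne] by simp
qed

lemma T_g: "T c = zpw g (a0 * c)"
proof -
  have h: "\<And>c. zpw g (a0 * (c + 1)) = mul t (zpw g (a0 * c))"
  proof -
    fix c
    have "zpw g (a0 * (c + 1)) = zpw g (a0 + a0 * c)" by (simp add: algebra_simps)
    also have "\<dots> = mul (zpw g a0) (zpw g (a0 * c))" by (rule zpw_add[OF gU])
    finally show "zpw g (a0 * (c + 1)) = mul t (zpw g (a0 * c))" using t_zpw by simp
  qed
  have "zpw g (a0 * c) = zpw t c"
    by (rule hom_unique[of t "\<lambda>c. zpw g (a0 * c)", OF tU zpw_S[OF gU] _ h]) (simp add: zpw_0)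
  moreover have "T c = zpw t c" unfolding t_def by (rule T_zpw)
  ultimately show ?thesis by simp
qed

definition psi where "psi x = (if x = z then None else Some (SOME k. x = zpw g k))"

lemma psi_zpw: "psi (zpw g k) = Some k"
proof -
  have nz: "zpw g k \<noteq> z" using zpw_U[OF gU] U_def by blast
  have "zpw g k = zpw g (SOME k'. zpw g k = zpw g k')" by (rule someI[of _ k]) simp
  then have "(SOME k'. zpw g k = zpw g k') = k" using zpw_inj[OF gU g_ge g_ne] by metis
  then show ?thesis unfolding psi_def using nz by simp
qed

lemma psi_z: "psi z = None" unfolding psi_def by simp

lemma S_cases: "x \<in> S \<Longrightarrow> x = z \<or> (\<exists>k. x = zpw g k)"
  using all_powers U_def by blast

lemma iso: "iso_to_Fn S add mul z e f (nat a0) psi"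
  unfolding iso_to_Fn_def
proof (intro conjI ballI allI)
  show "bij_betw psi S UNIV"
    unfolding bij_betw_def
  proof
    show "inj_on psi S"
    proof (rule inj_onI)
      fix x y assume x: "x \<in> S" and y: "y \<in> S" and eq: "psi x = psi y"
      show "x = y"
      proof (cases "x = z")
        case True
        then have "psi y = None" using eq psi_z by simp
        then show ?thesis using True unfolding psi_def by (simp split: if_splits)
      next
        case False
        then obtain a where a: "x = zpw g a" using S_cases x by blast
        show ?thesis
        proof (cases "y = z")
          case True
          then show ?thesis using eq psi_z psi_zpw a by simp
        next
          case False
          then obtain b where b: "y = zpw g b" using S_cases y by blast
          then show ?thesis using eq a psi_zpw by simp
        qed
      qed
    qed
    show "psi ` S = UNIV"
    proof (rule set_eqI, rule iffI)
      fix w :: zmax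
      show "w \<in> psi ` S"
      proof (cases w)
        case None then show ?thesis using psi_z z_in by force
      next
        case (Some k)
        have "psi (zpw g k) = w" using psi_zpw Some by simp
        then show ?thesis using zpw_S[OF gU, of k] by (metis image_eqI)
      qed
    qed simp
  qed
  show "psi z = zmax_zero" using psi_z zmax_zero_def by simp
  show "psi e = zmax_one" using psi_zpw[of 0] zpw_0 zmax_one_def by simp
  fix x y assume x: "x \<in> S" and y: "y \<in> S"
  show "psi (add x y) = zmax_add (psi x) (psi y)"
  proof (cases "x = z")
    case True then show ?thesis using add_z1[OF y] psi_z by (simp add: zmax_add_def)
  next
    case False
    then obtain a where a: "x = zpw g a" using S_cases x by blast
    show ?thesis
    proof (cases "y = z")
      case True then show ?thesis using add_z2[OF x] psi_z a psi_zpw by (simp add: zmax_add_def)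
    next
      case False
      then obtain b where b: "y = zpw g b" using S_cases y by blast
      have "add x y = zpw g (max a b)"
      proof (cases "a \<le> b")
        case True
        then have "le x y" using zpw_le_iff[OF gU g_ge g_ne] a b by simp
        then show ?thesis unfolding le_def using True b by (simp add: max_def)
      next
        case False
        then have "le y x" using zpw_le_iff[OF gU g_ge g_ne] a b by simp
        then show ?thesis unfolding le_def using False a add_comm[OF x y] by (simp add: max_def)
      qed
      then show ?thesis using a b psi_zpw by (simp add: zmax_add_def)
    qed
  qed
  show "psi (mul x y) = zmax_mul (psi x) (psi y)"
  proof (cases "x = z")
    case True then show ?thesis using mul_z(1)[OF y] psi_z by (simp add: zmax_mul_def)
  next
    case False
    then obtain a where a: "x = zpw g a" using S_cases x by blast
    show ?thesis
    proof (cases "y = z")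
      case True then show ?thesis using mul_z(2)[OF x] psi_z a psi_zpw by (simp add: zmax_mul_def)
    next
      case False
      then obtain b where b: "y = zpw g b" using S_cases y by blast
      have "mul x y = zpw g (a + b)" using zpw_add[OF gU] a b by simp
      then show ?thesis using a b psi_zpw by (simp add: zmax_mul_def)
    qed
  qed
next
  fix w :: zmax
  show "psi (f w) = Fn_map (nat a0) w"
  proof (cases w)
    case None then show ?thesis using f_None psi_z Fn_map_def by simp
  next
    case (Some c)
    have "f w = zpw g (a0 * c)" using Some T_g T_def by simp
    then show ?thesis using psi_zpw Some a0_pos Fn_map_def by simp
  qed
qed

end

theorem mainTheorem18:
  fixes S :: "'a set" and add mul :: "'a \<Rightarrow> 'a \<Rightarrow> 'a" and z e :: 'a
    and f :: "zmax \<Rightarrow> 'a"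
  assumes "division_semialgebra_zmax S add mul z e f"
    and "finite (unit_cosets S mul e f)"
  shows "\<exists>n::nat. n > 0 \<and> (\<exists>\<psi>. iso_to_Fn S add mul z e f n \<psi>)"
proof -
  interpret D: dsa S add mul z e f using assms by unfold_locales
  have "nat D.a0 > 0" using D.a0_pos by simp
  then show ?thesis using D.iso by blast
qed

end
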